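(* Let $f=\frac1n\sum_{i=1}^n f_i$ be convex, and suppose each $f_i$ is $L_i$-smooth for some $L_i>0$. Let $L=\max_{1\le i\le n}L_i$, let $\mu\in(0,1/L]$, and let the integers $t(k)\ge1$ satisfy $\sum_{k=0}^\infty\beta^{t(k)}<\infty$. Let $\{\mathbf{x}_k\}$ be generated by NEAR-DGD$^+$ from an arbitrary initial point. Then $$f\Big(\frac1T\sum_{k=0}^{T-1}\bar x_k\Big)-f^*=O\Big(\frac1T\Big)\qquad\text{for } T\in\mathbb{N},$$ i.e. there is a constant $C>0$ independent of $T$ bounding $T$ times the left-hand side.
   Context: Let $n,p\in\mathbb{N}$. $W=(w_{ij})$ is an $n\times n$ doubly stochastic matrix whose associated directed graph is strongly connected and has a self-loop at every vertex ($w_{ii}>0$). $1_n\in\mathbb{R}^n$ is the all-ones vector, and $\beta\in[0,1)$ denotes the spectral norm of $W-\frac1n1_n1_n^\top$. Local costs $f_i:\mathbb{R}^p\to\mathbb{R}$ are differentiable, $f=\frac1n\sum_i f_i$, $f^*=\min f$, and the set of minimizers $X^*$ is assumed nonempty. A function $h$ is $L$-smooth if $\|\nabla h(x)-\nabla h(y)\|\le L\|x-y\|$ for all $x,y$. For $\mathbf{x}=(x_1^\top,\dots,x_n^\top)^\top\in\mathbb{R}^{np}$ put $\nabla F(\mathbf{x})=(\nabla f_1(x_1)^\top,\dots,\nabla f_n(x_n)^\top)^\top$. NEAR-DGD$^+$: $\mathbf{x}_{k+1}=(W^{t(k)}\otimes I_p)(\mathbf{x}_k-\mu\nabla F(\mathbf{x}_k))$,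 $k\ge0$ ($\otimes$ Kronecker product). With $\mathbf{x}_k=(x_{1,k}^\top,\dots,x_{n,k}^\top)^\top$, $\bar x_k=\frac1n\sum_i x_{i,k}$. $\|\cdot\|$ is the Euclidean norm. *)

theory Defs
  imports "HOL-Analysis.Analysis"
begin

primrec matpow :: "real^'n^'n \<Rightarrow> nat \<Rightarrow> real^'n^'n" where
  "matpow A 0 = mat 1"
| "matpow A (Suc k) = A ** matpow A k"

definition doubly_stochastic :: "real^'n^'n \<Rightarrow> bool" where
  "doubly_stochastic W \<longleftrightarrow>
     (\<forall>i j. W $ i $ j \<ge> 0) \<and>
     (\<forall>i. (\<Sum>j\<in>UNIV. W $ i $ j) = 1) \<and>
     (\<forall>j. (\<Sum>i\<in>UNIV. W $ i $ j) = 1)"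

definition strongly_connected_mat :: "real^'n^'n \<Rightarrow> bool" where
  "strongly_connected_mat W \<longleftrightarrow> (\<forall>i j. (i, j) \<in> {(a, b). W $ a $ b > 0}\<^sup>*)"

definition avg_mat :: "real^'n^'n" where
  "avg_mat = (\<chi> i j. 1 / real CARD('n))"

definition spec_norm :: "real^'n^'m \<Rightarrow> real" where
  "spec_norm A = onorm (\<lambda>v. A *v v)"

definition smooth_grad :: "real \<Rightarrow> (real^'p \<Rightarrow> real^'p) \<Rightarrow> bool" where
  "smooth_grad L g \<longleftrightarrow> (\<forall>x y. norm (g x - g y) \<le> L * norm (x - y))"

definition near_dgd_step ::
  "real^'n^'n \<Rightarrow> nat \<Rightarrow> real \<Rightarrow> ('n \<Rightarrow> real^'p \<Rightarrow> real^'p) \<Rightarrow> ('n \<Rightarrow> real^'p) \<Rightarrow> ('n \<Rightarrow> real^'p)" where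
  "near_dgd_step W t \<mu> g x = (\<lambda>i. \<Sum>j\<in>UNIV. (matpow W t $ i $ j) *\<^sub>R (x j - \<mu> *\<^sub>R g j (x j)))"

end

theory Submission
  imports Defs
begin


lemma line_deriv:
  fixes F :: "'a::real_inner \<Rightarrow> real"
  assumes "\<And>z. (F has_derivative (\<lambda>h. G z \<bullet> h)) (at z)"
  shows "((\<lambda>s. F (x + s *\<^sub>R v)) has_real_derivative (G (x + s *\<^sub>R v) \<bullet> v)) (at s)"
proof -
  have l: "((\<lambda>s. x + s *\<^sub>R v) has_derivative (\<lambda>h. h *\<^sub>R v)) (at s)"
    by (auto intro!: derivative_eq_intros)
  have "((\<lambda>s. F (x + s *\<^sub>R v)) has_derivative (\<lambda>h. G (x + s *\<^sub>R v) \<bullet> (h *\<^sub>R v))) (at s)"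
    using has_derivative_compose[OF l assms] by (simp add: o_def)
  then show ?thesis unfolding has_field_derivative_def
    by (rule has_derivative_eq_rhs) (auto simp: fun_eq_iff mult.commute)
qed

lemma descent_lemma:
  fixes F :: "'a::real_inner \<Rightarrow> real"
  assumes d: "\<And>z. (F has_derivative (\<lambda>h. G z \<bullet> h)) (at z)"
    and lip: "\<And>a b. norm (G a - G b) \<le> L * norm (a - b)"
  shows "F y \<le> F x + G x \<bullet> (y - x) + L / 2 * (norm (y - x))^2"
proof -
  define v where "v = y - x"
  define \<phi> where "\<phi> s = F (x + s *\<^sub>R v) - s * (G x \<bullet> v) - L / 2 * s^2 * (norm v)^2" for s
  have "\<phi> 1 \<le> \<phi> 0"
  proof (rule DERIV_nonpos_imp_nonincreasing[where f=\<phi>])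
    show "0 \<le> (1::real)" by simp
  next
    fix s :: real assume s: "0 \<le> s" "s \<le> 1"
    have D: "(\<phi> has_real_derivative (G (x + s *\<^sub>R v) \<bullet> v - G x \<bullet> v - L * s * (norm v)^2)) (at s)"
      unfolding \<phi>_def
      by (rule derivative_eq_intros line_deriv[OF d] refl)+ (simp add: algebra_simps)
    have "G (x + s *\<^sub>R v) \<bullet> v - G x \<bullet> v = (G (x + s *\<^sub>R v) - G x) \<bullet> v" by (simp add: inner_diff_left)
    also have "\<dots> \<le> norm (G (x + s *\<^sub>R v) - G x) * norm v" by (rule norm_cauchy_schwarz)
    also have "\<dots> \<le> L * norm (s *\<^sub>R v) * norm v"
      using lip[of "x + s *\<^sub>R v" x] by (intro mult_right_mono) auto
    also have "\<dots> = L * s * (norm v)^2" using s by (simp add: power2_eq_square)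
    finally have "G (x + s *\<^sub>R v) \<bullet> v - G x \<bullet> v - L * s * (norm v)^2 \<le> 0" by simp
    then show "\<exists>y. (\<phi> has_real_derivative y) (at s) \<and> y \<le> 0" using D by blast
  qed
  then show ?thesis unfolding \<phi>_def v_def by (simp add: algebra_simps)
qed

lemma convex_tangent:
  fixes F :: "'a::real_inner \<Rightarrow> real"
  assumes cv: "convex_on UNIV F"
    and d: "\<And>z. (F has_derivative (\<lambda>h. G z \<bullet> h)) (at z)"
  shows "F x + G x \<bullet> (z - x) \<le> F z"
proof -
  define \<psi> where "\<psi> s = F (x + s *\<^sub>R (z - x))" for s
  have c: "convex_on UNIV \<psi>"
  proof (rule convex_onI)
    fix t a b :: real assume t: "0 < t" "t < 1"
    have "\<psi> ((1 - t) *\<^sub>R a + t *\<^sub>R b) = F ((1 - t) *\<^sub>R (x + a *\<^sub>R (z - x)) + t *\<^sub>R (x + b *\<^sub>R (z - x)))"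
      unfolding \<psi>_def by (simp add: algebra_simps)
    also have "\<dots> \<le> (1 - t) * \<psi> a + t * \<psi> b" unfolding \<psi>_def
      using convex_onD[OF cv, of t] t by simp
    finally show "\<psi> ((1 - t) *\<^sub>R a + t *\<^sub>R b) \<le> (1 - t) * \<psi> a + t * \<psi> b" .
  qed simp
  have "(\<psi> has_real_derivative (G (x + 0 *\<^sub>R (z - x)) \<bullet> (z - x))) (at 0)"
    unfolding \<psi>_def by (rule line_deriv[OF d])
  then have "G x \<bullet> (z - x) * (1 - 0) \<le> \<psi> 1 - \<psi> 0"
    by (intro convex_on_imp_above_tangent[OF c]) auto
  then show ?thesis unfolding \<psi>_def by simp
qed



lemma inexact_step:
  fixes F :: "'a::real_inner \<Rightarrow> real"
  assumes cv: "convex_on UNIV F"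
    and d: "\<And>z. (F has_derivative (\<lambda>h. G z \<bullet> h)) (at z)"
    and lip: "\<And>a b. norm (G a - G b) \<le> L * norm (a - b)"
    and mu: "0 < \<mu>" "\<mu> * L \<le> 1"
    and x': "x' = x - \<mu> *\<^sub>R (G x + \<delta>)"
  shows "F x' - F xs \<le> ((norm (x - xs))^2 - (norm (x' - xs))^2) / (2 * \<mu>) + norm \<delta> * norm (x' - xs)"
proof -
  define g where "g = G x"
  define dd where "dd = g + \<delta>"
  define u where "u = x - xs"
  have x'x: "x' - x = - (\<mu> *\<^sub>R dd)" using x' by (simp add: dd_def g_def)
  have x's: "x' - xs = u - \<mu> *\<^sub>R dd" using x' by (simp add: dd_def g_def u_def algebra_simps)
  have 1: "F x' \<le> F x + g \<bullet> (x' - x) + L / 2 * (norm (x' - x))^2"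
    unfolding g_def by (rule descent_lemma[OF d lip])
  have 2: "F x + g \<bullet> (xs - x) \<le> F xs"
    unfolding g_def by (rule convex_tangent[OF cv d])
  have "L / 2 * (norm (x' - x))^2 = (\<mu> * L) * (\<mu> / 2 * (norm dd)^2)"
    using x'x by (simp add: power2_eq_square)
  also have "\<dots> \<le> 1 * (\<mu> / 2 * (norm dd)^2)"
    by (rule mult_right_mono) (use mu in auto)
  finally have 3: "L / 2 * (norm (x' - x))^2 \<le> \<mu> / 2 * (dd \<bullet> dd)" by (simp add: power2_norm_eq_inner)
  have "F x' - F xs \<le> g \<bullet> u - \<mu> * (g \<bullet> dd) + \<mu> / 2 * (dd \<bullet> dd)"
    using 1 2 3 x'x unfolding u_def by (simp add: inner_simps)
  also have "\<dots> = (u \<bullet> u - (u - \<mu> *\<^sub>R dd) \<bullet> (u - \<mu> *\<^sub>R dd)) / (2 * \<mu>) - \<delta> \<bullet> (u - \<mu> *\<^sub>R dd)"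
    using mu unfolding dd_def by (simp add: inner_simps field_simps inner_commute)
  also have "\<dots> \<le> (u \<bullet> u - (u - \<mu> *\<^sub>R dd) \<bullet> (u - \<mu> *\<^sub>R dd)) / (2 * \<mu>) + norm \<delta> * norm (u - \<mu> *\<^sub>R dd)"
    using norm_cauchy_schwarz[of "- \<delta>" "u - \<mu> *\<^sub>R dd"] by simp
  finally have "F x' - F xs \<le> (u \<bullet> u - (u - \<mu> *\<^sub>R dd) \<bullet> (u - \<mu> *\<^sub>R dd)) / (2 * \<mu>) + norm \<delta> * norm (u - \<mu> *\<^sub>R dd)" .
  then show ?thesis by (simp only: x's power2_norm_eq_inner u_def)
qed



definition mmul :: "real^'n^'n \<Rightarrow> ('a::real_vector)^'n \<Rightarrow> 'a^'n" where
  "mmul M X = (\<chi> i. \<Sum>j\<in>UNIV. (M$i$j) *\<^sub>R X$j)"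

definition rows1 :: "real^'n^'n \<Rightarrow> bool" where
  "rows1 M \<longleftrightarrow> (\<forall>i. (\<Sum>j\<in>UNIV. M$i$j) = 1)"
definition cols1 :: "real^'n^'n \<Rightarrow> bool" where
  "cols1 M \<longleftrightarrow> (\<forall>j. (\<Sum>i\<in>UNIV. M$i$j) = 1)"

lemma mmul_mult: "mmul (A ** B) X = mmul A (mmul B X)"
  unfolding mmul_def matrix_matrix_mult_def vec_eq_iff
  apply (simp add: scaleR_sum_right scaleR_sum_left)
  apply (subst sum.swap)
  apply simp
  done

lemma mmul_diff_left: "mmul (A - B) X = mmul A X - mmul B X"
  unfolding mmul_def by (simp add: vec_eq_iff scaleR_diff_left sum_subtractf)

lemma mmul_diff_right: "mmul M (X - Y) = mmul M X - mmul M Y"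
  unfolding mmul_def by (simp add: vec_eq_iff scaleR_diff_right sum_subtractf)

lemma mmul_vec: "rows1 M \<Longrightarrow> mmul M (vec z) = vec z"
  unfolding mmul_def rows1_def by (simp add: vec_eq_iff scaleR_sum_left[symmetric])

lemma mmul_sum: "cols1 M \<Longrightarrow> (\<Sum>i\<in>UNIV. mmul M X $ i) = (\<Sum>i\<in>UNIV. X $ i)"
  unfolding mmul_def cols1_def
  by (simp add: sum.swap[of _ UNIV UNIV] scaleR_sum_left[symmetric])

lemma ds_rows_cols: "doubly_stochastic W \<Longrightarrow> rows1 W \<and> cols1 W"
  unfolding doubly_stochastic_def rows1_def cols1_def by auto

lemma rows1_mult: "rows1 A \<Longrightarrow> rows1 B \<Longrightarrow> rows1 (A ** B)"
  unfolding rows1_def matrix_matrix_mult_def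
  by (simp add: sum.swap[of _ UNIV UNIV] sum_distrib_left[symmetric])

lemma cols1_mult: "cols1 A \<Longrightarrow> cols1 B \<Longrightarrow> cols1 (A ** B)"
  unfolding cols1_def matrix_matrix_mult_def
  by (simp add: sum.swap[of _ UNIV UNIV] sum_distrib_right[symmetric])

lemma matpow_rc: "rows1 W \<Longrightarrow> cols1 W \<Longrightarrow> rows1 (matpow W t) \<and> cols1 (matpow W t)"
proof (induction t)
  case 0
  then show ?case unfolding rows1_def cols1_def mat_def
    by (auto simp: mat_def sum.delta sum.delta')
next
  case (Suc t)
  then show ?case by (simp add: rows1_mult cols1_mult)
qed

lemma mmul_avg: "mmul (avg_mat::real^'n^'n) X = vec ((1 / real CARD('n)) *\<^sub>R (\<Sum>i\<in>UNIV. X $ i))"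
  unfolding mmul_def avg_mat_def by (simp add: vec_eq_iff scaleR_sum_right)

lemma bl_mat: "bounded_linear (\<lambda>v. (A::real^'n^'m) *v v)"
  by (simp add: linear_linear)



lemma norm_mmul_le:
  fixes X :: "(real^'p)^'n" and A :: "real^'n^'n"
  shows "norm (mmul A X) \<le> spec_norm A * norm X"
proof -
  define b where "b = spec_norm A"
  have b0: "0 \<le> b" unfolding b_def spec_norm_def by (rule onorm_pos_le[OF bl_mat])
  define col where "col c = (\<chi> i. X $ i $ c)" for c
  have comp: "mmul A X $ i $ c = (A *v col c) $ i" for i c
    unfolding mmul_def col_def matrix_vector_mult_def by simp
  have "(norm (mmul A X))^2 = (\<Sum>i\<in>UNIV. \<Sum>c\<in>UNIV. (mmul A X $ i $ c)^2)"
    unfolding power2_norm_eq_inner inner_vec_def inner_real_def by (simp add: power2_eq_square)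
  also have "\<dots> = (\<Sum>c\<in>UNIV. \<Sum>i\<in>UNIV. (mmul A X $ i $ c)^2)"
    by (rule sum.swap)
  also have "\<dots> = (\<Sum>c\<in>UNIV. (norm (A *v col c))^2)"
    unfolding comp power2_norm_eq_inner inner_vec_def inner_real_def by (simp add: power2_eq_square)
  also have "\<dots> \<le> (\<Sum>c\<in>UNIV. (b * norm (col c))^2)"
  proof (rule sum_mono)
    fix c
    have "norm (A *v col c) \<le> b * norm (col c)"
      unfolding b_def spec_norm_def by (rule onorm[OF bl_mat])
    then show "(norm (A *v col c))^2 \<le> (b * norm (col c))^2"
      by (intro power_mono) auto
  qed
  also have "\<dots> = b^2 * (\<Sum>c\<in>UNIV. (norm (col c))^2)"
    by (simp add: power_mult_distrib sum_distrib_left)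
  also have "(\<Sum>c\<in>UNIV. (norm (col c))^2) = (\<Sum>c\<in>UNIV. \<Sum>i\<in>UNIV. (X $ i $ c)^2)"
    unfolding col_def power2_norm_eq_inner inner_vec_def inner_real_def by (simp add: power2_eq_square)
  also have "\<dots> = (\<Sum>i\<in>UNIV. \<Sum>c\<in>UNIV. (X $ i $ c)^2)"
    by (rule sum.swap)
  also have "\<dots> = (norm X)^2"
    unfolding power2_norm_eq_inner inner_vec_def inner_real_def by (simp add: power2_eq_square)
  finally have "(norm (mmul A X))^2 \<le> (b * norm X)^2" by (simp add: power_mult_distrib)
  then have "norm (mmul A X) \<le> b * norm X"
    by (rule power2_le_imp_le) (use b0 in simp)
  then show ?thesis unfolding b_def .
qed



definition vmean :: "('a::real_vector)^'n \<Rightarrow> 'a" where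
  "vmean X = (1 / real CARD('n)) *\<^sub>R (\<Sum>i\<in>UNIV. X $ i)"

lemma mmul_avg': "mmul avg_mat X = vec (vmean X)"
  unfolding vmean_def by (rule mmul_avg)

lemma vmean_mmul: "cols1 M \<Longrightarrow> vmean (mmul M X) = vmean X"
  unfolding vmean_def by (simp add: mmul_sum)

lemma sum_centered:
  fixes X :: "('a::real_vector)^'n"
  shows "(\<Sum>i\<in>UNIV. (X - vec (vmean X)) $ i) = 0"
proof -
  have "(\<Sum>i\<in>UNIV. (X - vec (vmean X)) $ i) = (\<Sum>i\<in>UNIV. X $ i) - real CARD('n) *\<^sub>R vmean X"
    by (simp add: sum_subtractf scaleR_sum_left[symmetric] sum_constant_scaleR)
  also have "\<dots> = 0" unfolding vmean_def by simp
  finally show ?thesis .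
qed

lemma pow_bound:
  fixes X :: "(real^'p)^'n"
  assumes r: "rows1 W" and c: "cols1 W" and z: "(\<Sum>i\<in>UNIV. X $ i) = 0"
  shows "norm (mmul (matpow W t) X) \<le> spec_norm (W - avg_mat) ^ t * norm X"
proof (induction t)
  case 0
  have "mmul (mat 1) X = X" unfolding mmul_def
    by (simp add: vec_eq_iff mat_def if_distrib[of "\<lambda>x. x *\<^sub>R _"] sum.delta cong: if_cong)
  then show ?case by simp
next
  case (Suc t)
  define Y where "Y = mmul (matpow W t) X"
  have cY: "(\<Sum>i\<in>UNIV. Y $ i) = 0" unfolding Y_def using matpow_rc[OF r c] z by (simp add: mmul_sum)
  have "mmul (matpow W (Suc t)) X = mmul W Y" by (simp add: mmul_mult Y_def)
  also have "\<dots> = mmul (W - avg_mat) Y" using cY by (simp add: mmul_diff_left mmul_avg' vmean_def)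
  finally have e: "mmul (matpow W (Suc t)) X = mmul (W - avg_mat) Y" .
  have b0: "0 \<le> spec_norm (W - avg_mat)" unfolding spec_norm_def by (rule onorm_pos_le[OF bl_mat])
  have "norm (mmul (W - avg_mat) Y) \<le> spec_norm (W - avg_mat) * norm Y" by (rule norm_mmul_le)
  also have "\<dots> \<le> spec_norm (W - avg_mat) * (spec_norm (W - avg_mat) ^ t * norm X)"
    using Suc b0 unfolding Y_def by (intro mult_left_mono) auto
  finally show ?case using e by simp
qed

lemma centered_step:
  fixes Y :: "(real^'p)^'n"
  assumes r: "rows1 W" and c: "cols1 W"
  shows "norm (mmul (matpow W t) Y - vec (vmean (mmul (matpow W t) Y)))
          \<le> spec_norm (W - avg_mat) ^ t * norm (Y - vec (vmean Y))"
proof -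
  have rc: "rows1 (matpow W t)" "cols1 (matpow W t)" using matpow_rc[OF r c] by auto
  have "mmul (matpow W t) Y - vec (vmean (mmul (matpow W t) Y)) = mmul (matpow W t) (Y - vec (vmean Y))"
    using rc by (simp add: vmean_mmul mmul_diff_right mmul_vec)
  then show ?thesis using pow_bound[OF r c sum_centered] by simp
qed

lemma norm_vec_const: "norm (vec z :: ('a::real_normed_vector)^'n) = sqrt (real CARD('n)) * norm z"
  unfolding norm_vec_def by (simp add: L2_set_constant)

lemma centered_le:
  fixes X :: "('a::real_inner)^'n"
  shows "norm (X - vec (vmean X)) \<le> norm (X - vec z)"
proof -
  define a where "a = X - vec (vmean X)"
  define b :: "'a^'n" where "b = vec (vmean X - z)"
  have ab: "X - vec z = a + b" unfolding a_def b_def by (simp add: vec_eq_iff)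
  have "a \<bullet> b = (\<Sum>i\<in>UNIV. a $ i) \<bullet> (vmean X - z)"
    unfolding b_def inner_vec_def by (simp add: inner_sum_left)
  also have "\<dots> = 0" unfolding a_def sum_centered by simp
  finally have "a \<bullet> b = 0" .
  then have "(norm (X - vec z))^2 = (norm a)^2 + (norm b)^2"
    unfolding ab power2_norm_eq_inner by (simp add: inner_simps inner_commute)
  then have "(norm a)^2 \<le> (norm (X - vec z))^2" by simp
  then show ?thesis unfolding a_def by (rule power2_le_imp_le) simp
qed

lemma norm_vec_lip:
  fixes A :: "('a::real_normed_vector)^'n" and B :: "('b::real_normed_vector)^'n"
  assumes "\<And>i. norm (A $ i) \<le> c * norm (B $ i)" "0 \<le> c"
  shows "norm A \<le> c * norm B"
  unfolding norm_vec_def using assms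
  by (simp add: L2_set_right_distrib L2_set_mono)



lemma coupled_bound:
  fixes e r bk :: "nat \<Rightarrow> real"
  assumes e0: "\<And>k. 0 \<le> e k" and r0: "\<And>k. 0 \<le> r k" and b0: "\<And>k. 0 \<le> bk k"
    and sb: "summable bk" and a: "0 \<le> a" and c: "0 < c"
    and ee: "\<And>k. e (Suc k) \<le> bk k * (a * (e k + r k + 1))"
    and rr: "\<And>k. r (Suc k) \<le> r k + c * e k"
  shows "\<exists>B. (\<forall>k. e k \<le> B \<and> r k \<le> B) \<and> (\<exists>E. \<forall>T. (\<Sum>k<T. e k) \<le> E)"
proof -
  define m where "m = max 1 (1 / c)"
  define \<gamma> where "\<gamma> = c * a * m"
  define Z where "Z k = r k + c * e k + 1" for k
  define S where "S = suminf bk"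
  have m1: "1 \<le> m" unfolding m_def by simp
  have g0: "0 \<le> \<gamma>" unfolding \<gamma>_def using a c m1 by simp
  have Zpos: "1 \<le> Z k" for k unfolding Z_def using e0[of k] r0[of k] c by simp
  have erZ: "e k + r k + 1 \<le> m * Z k" for k
  proof -
    have "e k = (1 / c) * (c * e k)" using c by simp
    also have "\<dots> \<le> m * (c * e k)" unfolding m_def using c e0[of k] by (intro mult_right_mono) auto
    finally have "e k \<le> m * (c * e k)" .
    moreover have "r k + 1 \<le> m * (r k + 1)" using m1 r0[of k] by (simp add: mult_le_cancel_right1)
    ultimately show ?thesis unfolding Z_def by (simp add: algebra_simps)
  qed
  have Zstep: "Z (Suc k) \<le> (1 + \<gamma> * bk k) * Z k" for k
  proof -
    have "Z (Suc k) \<le> r k + c * e k + c * (bk k * (a * (e k + r k + 1))) + 1"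
      unfolding Z_def using rr[of k] ee[of k] c by (smt (verit) mult_left_mono)
    also have "c * (bk k * (a * (e k + r k + 1))) \<le> c * (bk k * (a * (m * Z k)))"
      using erZ[of k] c b0[of k] a by (intro mult_left_mono) auto
    finally show ?thesis unfolding Z_def \<gamma>_def by (simp add: algebra_simps)
  qed
  have Zexp: "Z k \<le> Z 0 * exp (\<gamma> * (\<Sum>j<k. bk j))" for k
  proof (induction k)
    case 0 then show ?case by simp
  next
    case (Suc k)
    have "Z (Suc k) \<le> (1 + \<gamma> * bk k) * Z k" by (rule Zstep)
    also have "\<dots> \<le> exp (\<gamma> * bk k) * (Z 0 * exp (\<gamma> * (\<Sum>j<k. bk j)))"
      using Suc g0 b0[of k] Zpos[of k] by (intro mult_mono) (auto simp: exp_ge_add_one_self add_increasing)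
    also have "\<dots> = Z 0 * exp (\<gamma> * (\<Sum>j<Suc k. bk j))"
      by (simp add: exp_add[symmetric] algebra_simps)
    finally show ?case .
  qed
  define B where "B = Z 0 * exp (\<gamma> * S) * m"
  have ZB: "Z k \<le> Z 0 * exp (\<gamma> * S)" for k
  proof -
    have "(\<Sum>j<k. bk j) \<le> S" unfolding S_def using sb b0 by (intro sum_le_suminf) auto
    then have "exp (\<gamma> * (\<Sum>j<k. bk j)) \<le> exp (\<gamma> * S)" using g0 by (simp add: mult_left_mono)
    then show ?thesis using Zexp[of k] Zpos[of 0] by (smt (verit) mult_left_mono)
  qed
  have eB: "e k \<le> B \<and> r k \<le> B" for k
  proof -
    have "e k + r k + 1 \<le> B" unfolding B_def using erZ[of k] ZB[of k] m1
      by (smt (verit) mult_right_mono mult.commute)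
    then show ?thesis using e0[of k] r0[of k] by simp
  qed
  have "(\<Sum>k<T. e k) \<le> e 0 + a * (2 * B + 1) * S" for T
  proof -
    have "(\<Sum>k<T. e k) \<le> (\<Sum>k<Suc T. e k)" using e0 by (simp add: sum_nonneg)
    also have "\<dots> = e 0 + (\<Sum>k<T. e (Suc k))" by (rule sum.lessThan_Suc_shift)
    also have "(\<Sum>k<T. e (Suc k)) \<le> (\<Sum>k<T. bk k * (a * (2 * B + 1)))"
    proof (rule sum_mono)
      fix k
      have "e k + r k + 1 \<le> 2 * B + 1" using eB[of k] by simp
      then have "bk k * (a * (e k + r k + 1)) \<le> bk k * (a * (2 * B + 1))"
        using a b0[of k] by (intro mult_left_mono) auto
      then show "e (Suc k) \<le> bk k * (a * (2 * B + 1))" using ee[of k] by simp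
    qed
    also have "\<dots> = (\<Sum>k<T. bk k) * (a * (2 * B + 1))" by (simp add: sum_distrib_right)
    also have "\<dots> \<le> S * (a * (2 * B + 1))"
    proof (rule mult_right_mono)
      show "(\<Sum>k<T. bk k) \<le> S" unfolding S_def using sb b0 by (intro sum_le_suminf) auto
      have "0 \<le> B" using eB[of 0] e0[of 0] by simp
      then show "0 \<le> a * (2 * B + 1)" using a by simp
    qed
    finally show ?thesis by (simp add: algebra_simps)
  qed
  then show ?thesis using eB by blast
qed



lemma sq_root_bound:
  fixes r r' d :: real
  assumes "0 \<le> r" "0 \<le> r'" "0 \<le> d" "r'^2 \<le> r^2 + 2 * d * r'"
  shows "r' \<le> r + 2 * d"
proof (rule ccontr)
  assume "\<not> ?thesis"
  then have h: "r + 2 * d < r'" by simp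
  then have "r' * (r + 2 * d) < r' * r'" using assms by (intro mult_strict_left_mono) auto
  moreover have "r * r \<le> r' * r" using h assms by (intro mult_right_mono) auto
  ultimately show False using assms(4) by (simp add: power2_eq_square algebra_simps)
qed

theorem theorem2p4:
  fixes W :: "real^'n^'n"
    and fs :: "'n \<Rightarrow> real^'p \<Rightarrow> real"
    and g :: "'n \<Rightarrow> real^'p \<Rightarrow> real^'p"
    and Ls :: "'n \<Rightarrow> real"
    and \<mu> :: real
    and t :: "nat \<Rightarrow> nat"
    and x :: "nat \<Rightarrow> 'n \<Rightarrow> real^'p"
  defines "f \<equiv> (\<lambda>z. (1 / real CARD('n)) * (\<Sum>i\<in>UNIV. fs i z))"
    and "\<beta> \<equiv> spec_norm (W - avg_mat)"
    and "L \<equiv> Max (range Ls)"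
  assumes W_ds: "doubly_stochastic W"
    and W_sc: "strongly_connected_mat W"
    and W_loop: "\<forall>i. W $ i $ i > 0"
    and grad: "\<forall>i z. (fs i has_derivative (\<lambda>h. g i z \<bullet> h)) (at z)"
    and Ls_pos: "\<forall>i. Ls i > 0"
    and smooth: "\<forall>i. smooth_grad (Ls i) (g i)"
    and f_convex: "convex_on UNIV f"
    and minimizer: "\<exists>xs. \<forall>z. f xs \<le> f z"
    and mu_pos: "0 < \<mu>" and mu_le: "\<mu> \<le> 1 / L"
    and t_pos: "\<forall>k. t k \<ge> 1"
    and t_sum: "summable (\<lambda>k. \<beta> ^ t k)"
    and iter: "\<forall>k. x (Suc k) = near_dgd_step W (t k) \<mu> g (x k)"
  shows "\<exists>C>0. \<forall>T::nat. T \<ge> 1 \<longrightarrow>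
           real T * (f ((1 / real T) *\<^sub>R (\<Sum>k<T. (1 / real CARD('n)) *\<^sub>R (\<Sum>i\<in>UNIV. x k i))) - (INF z. f z)) \<le> C"
proof -
  define N where "N = real CARD('n)"
  have N0: "0 < N" unfolding N_def by simp
  have LsL: "Ls i \<le> L" for i unfolding L_def by (rule Max_ge) auto
  have L0: "0 < L" using LsL[of undefined] Ls_pos by (meson less_le_trans)
  have muL: "\<mu> * L \<le> 1" using mu_le L0 by (simp add: field_simps)
  have b0: "0 \<le> \<beta>" unfolding \<beta>_def spec_norm_def by (rule onorm_pos_le[OF bl_mat])
  have rc: "rows1 W" "cols1 W" using ds_rows_cols[OF W_ds] by auto
  have glip: "norm (g i a - g i b) \<le> L * norm (a - b)" for i a b
  proof -
    have "norm (g i a - g i b) \<le> Ls i * norm (a - b)" using smooth unfolding smooth_grad_def by blast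
    also have "\<dots> \<le> L * norm (a - b)" using LsL[of i] by (intro mult_right_mono) auto
    finally show ?thesis .
  qed
  define gf where "gf z = (1 / N) *\<^sub>R (\<Sum>i\<in>UNIV. g i z)" for z
  have fder: "(f has_derivative (\<lambda>h. gf z \<bullet> h)) (at z)" for z
  proof -
    have "((\<lambda>z. (1 / N) * (\<Sum>i\<in>UNIV. fs i z)) has_derivative (\<lambda>h. (1 / N) * (\<Sum>i\<in>UNIV. g i z \<bullet> h))) (at z)"
      using grad by (intro derivative_intros) auto
    then show ?thesis unfolding f_def N_def[symmetric]
      by (rule has_derivative_eq_rhs) (simp add: fun_eq_iff gf_def inner_sum_left)
  qed
  have gflip: "norm (gf a - gf b) \<le> L * norm (a - b)" for a b
  proof -
    have "gf a - gf b = (1 / N) *\<^sub>R (\<Sum>i\<in>UNIV. g i a - g i b)"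
      unfolding gf_def by (simp add: sum_subtractf scaleR_diff_right)
    then have "norm (gf a - gf b) = (1 / N) * norm (\<Sum>i\<in>UNIV. g i a - g i b)" using N0 by simp
    also have "\<dots> \<le> (1 / N) * (\<Sum>i\<in>(UNIV::'n set). L * norm (a - b))"
    proof -
      have "norm (\<Sum>i\<in>UNIV. g i a - g i b) \<le> (\<Sum>i\<in>UNIV. norm (g i a - g i b))" by (rule norm_sum)
      also have "\<dots> \<le> (\<Sum>i\<in>(UNIV::'n set). L * norm (a - b))" by (intro sum_mono glip)
      finally have "norm (\<Sum>i\<in>UNIV. g i a - g i b) \<le> (\<Sum>i\<in>(UNIV::'n set). L * norm (a - b))" .
      then show ?thesis using N0 by (intro mult_left_mono) auto
    qed
    also have "\<dots> = L * norm (a - b)" using N0 unfolding N_def by simp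
    finally show ?thesis .
  qed
  obtain xs where xs: "\<And>z. f xs \<le> f z" using minimizer by blast
  have INF: "(INF z. f z) = f xs"
  proof (rule antisym)
    have bdd: "bdd_below (range f)" using xs by (intro bdd_belowI2) blast
    show "(INF z. f z) \<le> f xs" by (rule cINF_lower[OF bdd UNIV_I])
    show "f xs \<le> (INF z. f z)" by (rule cINF_greatest) (auto intro: xs)
  qed
  define X where "X k = (\<chi> i. x k i)" for k
  define Y where "Y k = (\<chi> i. x k i - \<mu> *\<^sub>R g i (x k i))" for k
  define xb where "xb k = vmean (X k)" for k
  have xb_eq: "xb k = (1 / real CARD('n)) *\<^sub>R (\<Sum>i\<in>UNIV. x k i)" for k
    unfolding xb_def vmean_def X_def by simp
  have XS: "X (Suc k) = mmul (matpow W (t k)) (Y k)" for k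
    using iter unfolding X_def Y_def mmul_def near_dgd_step_def by (simp add: vec_eq_iff)
  have xbS: "xb (Suc k) = vmean (Y k)" for k
    unfolding xb_def XS using matpow_rc[OF rc] by (simp add: vmean_mmul)
  define \<delta> where "\<delta> k = (1 / N) *\<^sub>R (\<Sum>i\<in>UNIV. g i (x k i) - g i (xb k))" for k
  have xbS': "xb (Suc k) = xb k - \<mu> *\<^sub>R (gf (xb k) + \<delta> k)" for k
  proof -
    have "vmean (Y k) = xb k - \<mu> *\<^sub>R ((1 / N) *\<^sub>R (\<Sum>i\<in>UNIV. g i (x k i)))"
      unfolding vmean_def Y_def xb_eq N_def by (simp add: sum_subtractf scaleR_sum_right[symmetric] algebra_simps)
    also have "(1 / N) *\<^sub>R (\<Sum>i\<in>UNIV. g i (x k i)) = gf (xb k) + \<delta> k"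
      unfolding gf_def \<delta>_def by (simp add: sum_subtractf algebra_simps)
    finally show ?thesis using xbS by simp
  qed
  define e where "e k = norm (X k - vec (xb k))" for k
  define r where "r k = norm (xb k - xs)" for k
  have xi_le: "norm (x k i - xb k) \<le> e k" for k i
    using Finite_Cartesian_Product.norm_nth_le[of "X k - vec (xb k)" i] unfolding e_def X_def by simp
  have dle: "norm (\<delta> k) \<le> L * e k" for k
  proof -
    have "norm (\<delta> k) = (1 / N) * norm (\<Sum>i\<in>UNIV. g i (x k i) - g i (xb k))" unfolding \<delta>_def using N0 by simp
    also have "\<dots> \<le> (1 / N) * (\<Sum>i\<in>(UNIV::'n set). L * e k)"
    proof -
      have "norm (\<Sum>i\<in>UNIV. g i (x k i) - g i (xb k)) \<le> (\<Sum>i\<in>UNIV. norm (g i (x k i) - g i (xb k)))" by (rule norm_sum)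
      also have "\<dots> \<le> (\<Sum>i\<in>(UNIV::'n set). L * e k)"
      proof (rule sum_mono)
        fix i
        show "norm (g i (x k i) - g i (xb k)) \<le> L * e k"
          using glip[of i "x k i" "xb k"] xi_le[of k i] L0 by (smt (verit) mult_left_mono)
      qed
      finally have "norm (\<Sum>i\<in>UNIV. g i (x k i) - g i (xb k)) \<le> (\<Sum>i\<in>(UNIV::'n set). L * e k)" .
      then show ?thesis using N0 by (intro mult_left_mono) auto
    qed
    also have "\<dots> = L * e k" using N0 unfolding N_def by simp
    finally show ?thesis .
  qed
  define Gs where "Gs = (\<chi> i. g i xs)"
  define a where "a = 2 * (1 + sqrt N) + \<mu> * norm Gs"
  have a0: "0 \<le> a" unfolding a_def using mu_pos N0 by simp
  have ee: "e (Suc k) \<le> \<beta> ^ t k * (a * (e k + r k + 1))" for k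
  proof -
    have "e (Suc k) \<le> \<beta> ^ t k * norm (Y k - vec (vmean (Y k)))"
      unfolding e_def XS \<beta>_def
      using centered_step[OF rc, of "t k" "Y k"] matpow_rc[OF rc] by (simp add: vmean_mmul xbS)
    also have "norm (Y k - vec (vmean (Y k))) \<le> norm (Y k - vec xs)" by (rule centered_le)
    also have "norm (Y k - vec xs) \<le> a * (e k + r k + 1)"
    proof -
      define GX where "GX = (\<chi> i. g i (x k i))"
      have Yd: "Y k - vec xs = (X k - vec xs) - \<mu> *\<^sub>R GX"
        unfolding Y_def X_def GX_def by (simp add: vec_eq_iff)
      have Xd: "norm (X k - vec xs) \<le> e k + sqrt N * r k"
      proof -
        have "X k - vec xs = (X k - vec (xb k)) + vec (xb k - xs)" by (simp add: vec_eq_iff)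
        then have "norm (X k - vec xs) \<le> e k + norm (vec (xb k - xs) :: (real^'p)^'n)"
          unfolding e_def by (metis norm_triangle_ineq)
        then show ?thesis unfolding norm_vec_const r_def N_def .
      qed
      have "norm (GX - Gs) \<le> L * norm (X k - vec xs)"
        by (rule norm_vec_lip) (use L0 glip in \<open>auto simp: GX_def Gs_def X_def\<close>)
      then have GX: "norm GX \<le> L * norm (X k - vec xs) + norm Gs"
        by (metis norm_triangle_sub add.commute order_trans add_right_mono)
      have "norm (Y k - vec xs) \<le> norm (X k - vec xs) + \<mu> * norm GX"
        unfolding Yd using mu_pos by (metis norm_triangle_ineq4 norm_scaleR abs_of_pos)
      also have "\<dots> \<le> norm (X k - vec xs) + \<mu> * (L * norm (X k - vec xs) + norm Gs)"
        using GX mu_pos by (intro add_left_mono mult_left_mono) auto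
      also have "\<dots> = (1 + \<mu> * L) * norm (X k - vec xs) + \<mu> * norm Gs" by (simp add: algebra_simps)
      also have "\<dots> \<le> 2 * (e k + sqrt N * r k) + \<mu> * norm Gs"
        using muL Xd mu_pos L0 by (intro add_right_mono mult_mono) auto
      also have "\<dots> \<le> a * (e k + r k + 1)"
      proof -
        have er0: "0 \<le> e k" "0 \<le> r k" unfolding e_def r_def by auto
        have "sqrt N * r k \<le> (1 + sqrt N) * r k" using er0 by (intro mult_right_mono) auto
        moreover have "e k \<le> (1 + sqrt N) * e k" using er0 N0 by (simp add: algebra_simps)
        moreover have "\<mu> * norm Gs * (e k + r k) \<ge> 0" using er0 mu_pos by simp
        moreover have "2 * (1 + sqrt N) * (e k + r k + 1) \<ge> 0" using er0 N0 by (intro mult_nonneg_nonneg) auto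
        moreover have "a * (e k + r k + 1) = 2 * (1 + sqrt N) * (e k + r k) + 2 * (1 + sqrt N) + \<mu> * norm Gs * (e k + r k) + \<mu> * norm Gs"
          unfolding a_def by (simp add: algebra_simps)
        moreover have "0 \<le> sqrt N" using N0 by simp
        ultimately show ?thesis by (simp add: algebra_simps)
      qed
      finally show ?thesis .
    qed
    finally show ?thesis using b0 by (simp add: mult_left_mono)
  qed
  have stp: "f (xb (Suc k)) - f xs \<le> ((r k)^2 - (r (Suc k))^2) / (2 * \<mu>) + norm (\<delta> k) * r (Suc k)" for k
    unfolding r_def by (rule inexact_step[OF f_convex fder gflip mu_pos muL xbS'])
  have rr: "r (Suc k) \<le> r k + (2 * \<mu> * L) * e k" for k
  proof -
    have "0 \<le> f (xb (Suc k)) - f xs" using xs by simp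
    then have "0 \<le> ((r k)^2 - (r (Suc k))^2) / (2 * \<mu>) + norm (\<delta> k) * r (Suc k)" using stp[of k] by simp
    then have "0 \<le> (r k)^2 - (r (Suc k))^2 + 2 * (\<mu> * norm (\<delta> k)) * r (Suc k)"
      using mu_pos by (simp add: field_simps)
    then have "r (Suc k) \<le> r k + 2 * (\<mu> * norm (\<delta> k))"
      by (intro sq_root_bound) (use mu_pos in \<open>auto simp: r_def\<close>)
    also have "\<dots> \<le> r k + 2 * (\<mu> * (L * e k))" using dle[of k] mu_pos by (simp add: mult_left_mono)
    finally show ?thesis by (simp add: algebra_simps)
  qed
  obtain B E where BE: "\<And>k. e k \<le> B \<and> r k \<le> B" "\<And>T. (\<Sum>k<T. e k) \<le> E"
    using coupled_bound[of e r "\<lambda>k. \<beta> ^ t k" a "2 * \<mu> * L", OF _ _ _ t_sum a0 _ ee rr]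
      b0 mu_pos L0 unfolding e_def r_def by auto
  have B0: "0 \<le> B" using BE(1)[of 0] unfolding r_def by (meson norm_ge_zero order_trans)
  have fstep: "f (xb (Suc k)) - f xs \<le> ((r k)^2 - (r (Suc k))^2) / (2 * \<mu>) + L * B * e k" for k
  proof -
    have "norm (\<delta> k) * r (Suc k) \<le> (L * e k) * B"
      using dle[of k] BE(1)[of "Suc k"] L0 by (intro mult_mono) (auto simp: r_def e_def)
    then show ?thesis using stp[of k] by (simp add: algebra_simps)
  qed
  have sumb: "(\<Sum>k<Suc T. f (xb k) - f xs) \<le> (f (xb 0) - f xs) + ((r 0)^2 - (r T)^2) / (2 * \<mu>) + L * B * (\<Sum>k<T. e k)" for T
  proof (induction T)
    case 0 then show ?case by simp
  next
    case (Suc T)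
    have "(\<Sum>k<Suc (Suc T). f (xb k) - f xs) = (\<Sum>k<Suc T. f (xb k) - f xs) + (f (xb (Suc T)) - f xs)" by simp
    also have "\<dots> \<le> ((f (xb 0) - f xs) + ((r 0)^2 - (r T)^2) / (2 * \<mu>) + L * B * (\<Sum>k<T. e k))
        + (((r T)^2 - (r (Suc T))^2) / (2 * \<mu>) + L * B * e T)"
      using Suc fstep[of T] by (rule add_mono)
    also have "\<dots> = (f (xb 0) - f xs) + ((r 0)^2 - (r (Suc T))^2) / (2 * \<mu>) + L * B * (\<Sum>k<Suc T. e k)"
      by (simp add: diff_divide_distrib algebra_simps)
    finally show ?case .
  qed
  define C0 where "C0 = (f (xb 0) - f xs) + (r 0)^2 / (2 * \<mu>) + L * B * E"
  have sumC: "(\<Sum>k<T. f (xb k) - f xs) \<le> C0" if T1: "T \<ge> 1" for T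
  proof -
    obtain T' where T': "T = Suc T'" using T1 by (cases T) auto
    have "L * B * (\<Sum>k<T'. e k) \<le> L * B * E" using BE(2) L0 B0 by (intro mult_left_mono) auto
    moreover have "((r 0)^2 - (r T')^2) / (2 * \<mu>) \<le> (r 0)^2 / (2 * \<mu>)"
      using mu_pos by (intro divide_right_mono) auto
    ultimately show ?thesis unfolding T' C0_def using sumb[of T'] by linarith
  qed
  show ?thesis
  proof (intro exI[of _ "max C0 1"] conjI allI impI)
    show "0 < max C0 1" by simp
    fix T :: nat assume T: "T \<ge> 1"
    have T0: "0 < real T" using T by simp
    have avg: "(1 / real T) *\<^sub>R (\<Sum>k<T. (1 / real CARD('n)) *\<^sub>R (\<Sum>i\<in>UNIV. x k i)) = (\<Sum>k<T. (1 / real T) *\<^sub>R xb k)"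
      unfolding xb_eq by (simp add: scaleR_sum_right)
    have "f (\<Sum>k<T. (1 / real T) *\<^sub>R xb k) \<le> (\<Sum>k<T. (1 / real T) * f (xb k))"
      by (rule convex_on_sum[OF _ _ f_convex]) (use T in \<open>auto simp: lessThan_empty_iff\<close>)
    then have "real T * (f (\<Sum>k<T. (1 / real T) *\<^sub>R xb k) - f xs) \<le> real T * ((\<Sum>k<T. (1 / real T) * f (xb k)) - f xs)"
      using T0 by (intro mult_left_mono) auto
    also have "\<dots> = (\<Sum>k<T. f (xb k) - f xs)"
      using T0 by (simp add: sum_distrib_left[symmetric] sum_subtractf right_diff_distrib sum_divide_distrib[symmetric])
    also have "\<dots> \<le> max C0 1" using sumC[OF T] by simp
    finally show "real T * (f ((1 / real T) *\<^sub>R (\<Sum>k<T. (1 / real CARD('n)) *\<^sub>R (\<Sum>i\<in>UNIV. x k i))) - (INF z. f z)) \<le> max C0 1"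
      unfolding avg INF .
  qed
qed


end
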